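(* Let $k,\ell\ge1$ and $\vec x=(x_1,\dots,x_k)$, $\vec y=(y_1,\dots,y_\ell)$ be distinct commuting formal variables. Then: (1) for $\sigma\in\Sigma_k$, $\tau\in\Sigma_\ell$ and $(r,\alpha,\beta)\in\tilde{\mathfrak S}$, $\Phi_{r,\alpha,\beta}(\sigma(\vec x),\tau(\vec y))=\Phi_{r,\alpha\circ\sigma^{-1},\beta\circ\tau^{-1}}(\vec x,\vec y)$; (2) distinct triples in $\tilde{\mathfrak S}$ give distinct vectors $\Phi_{r,\alpha,\beta}(\vec x,\vec y)$; (3) $\tilde{\mathfrak S}=\{(r,\alpha\circ\sigma,\beta\circ\tau):(r,\alpha,\beta)\in\mathfrak S,\sigma\in\Sigma_k,\tau\in\Sigma_\ell\}$; this gives natural actions of $\Sigma_k\times\Sigma_\ell$ on $\tilde{\mathfrak S}$ and on $\{\Phi_{r,\alpha,\beta}(\vec x,\vec y):(r,\alpha,\beta)\in\tilde{\mathfrak S}\}$ (via $(\sigma,\tau)\cdot\Phi_{r,\alpha,\beta}(\vec x,\vec y)=\Phi_{r,\alpha,\beta}(\sigma(\vec x),\tau(\vec y))$), and the latter action is free; (4) for fixed $r_0$ with $\max(k,\ell)\le r_0\le k+\ell$ and $\tilde{\mathfrak S}_{r_0}=\{(r,\alpha,\beta)\in\tilde{\mathfrak S}:r=r_0\}$, every $\pi\in\Sigma_{r_0}$ satisfies $\pi(\Phi_{r_0,\alpha,\beta}(\vec x,\vec y))=\Phi_{r_0,\pi^{-1}\circ\alpha,\pi^{-1}\circ\beta}(\vec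 x,\vec y)$, giving a natural action of $\Sigma_{r_0}$ on $\tilde{\mathfrak S}_{r_0}$, and this action is free; (5) for $(r,\alpha,\beta)\in\tilde{\mathfrak S}$ with $\Phi_{r,\alpha,\beta}(\vec x,\vec y)=(z_1,\dots,z_r)$ and $1\le r'\le r''\le r$, put $\vec r^\sharp=(r',r'+1,\dots,r'')$, $\vec z^\sharp=(z_{r'},\dots,z_{r''})$, $\vec k^\sharp=\alpha^{-1}(\vec r^\sharp)$, $\vec\ell^\sharp=\beta^{-1}(\vec r^\sharp)$, with $\vec x^\sharp,\vec y^\sharp$ the corresponding subvectors of $\vec x,\vec y$; then $\vec z^\sharp=\Phi_{r^\sharp,\alpha|_{\vec k^\sharp},\beta|_{\vec\ell^\sharp}}(\vec x^\sharp,\vec y^\sharp)$.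
   Context: $[n]=\{1,\dots,n\}$. $\mathfrak S$ is the set of triples $(r,\alpha,\beta)$ with $\max(k,\ell)\le r\le k+\ell$, $\alpha:[k]\to[r]$, $\beta:[\ell]\to[r]$ order-preserving injections with $\mathrm{im}\,\alpha\cup\mathrm{im}\,\beta=[r]$; $\tilde{\mathfrak S}$ is defined the same way but with $\alpha,\beta$ arbitrary injections. For such a triple, $\Phi_{r,\alpha,\beta}(\vec x,\vec y)=(x_{\alpha^{-1}(1)}y_{\beta^{-1}(1)},\dots,x_{\alpha^{-1}(r)}y_{\beta^{-1}(r)})$ with the convention $x_\emptyset=y_\emptyset=1$ (so the $u$-th entry is $x_i$, $y_j$ or the formal product $x_iy_j$). For $\sigma\in\Sigma_k$, $\sigma(\vec x)=(x_{\sigma(1)},\dots,x_{\sigma(k)})$, and for $\pi\in\Sigma_{r}$ acting on a vector $(z_1,\dots,z_r)$, $\pi(\vec z)=(z_{\pi(1)},\dots,z_{\pi(r)})$. For subvectors $\vec k^\sharp,\vec\ell^\sharp,\vec r^\sharp=(r_{i_1},\dots,r_{i_{p}})$ of $[k],[\ell],[r]$ with $\alpha(\vec k^\sharp)\cup\beta(\vec\ell^\sharp)=\vec r^\sharp$, $\Phi_{r^\sharp,\alpha|_{\vec k^\sharp},\beta|_{\vec\ell^\sharp}}(\vec x^\sharp,\vec y^\sharp)=(x_{\alpha^{-1}(r_{i_1})}y_{\beta^{-1}(r_{i_1})},\dots,x_{\alpha^{-1}(r_{i_p})}y_{\beta^{-1}(r_{i_p})})$. *)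

theory Defs
  imports "HOL-Library.FuncSet" "HOL-Library.Multiset" "HOL-Combinatorics.Permutations"
begin

text \<open>Formal variables: x_i is represented by Inl i, y_j by Inr j (all distinct).
  A formal commutative monomial is a multiset of variables; the empty multiset is 1.
  Injections alpha : [k] -> [r] are extensional functions (undefined outside [k]).\<close>

type_synonym var = "nat + nat"
type_synonym triple = "nat \<times> (nat \<Rightarrow> nat) \<times> (nat \<Rightarrow> nat)"

definition Stilde :: "nat \<Rightarrow> nat \<Rightarrow> triple set" where
  "Stilde k l = {(r, \<alpha>, \<beta>). max k l \<le> r \<and> r \<le> k + l
      \<and> \<alpha> \<in> {1..k} \<rightarrow>\<^sub>E {1..r} \<and> inj_on \<alpha> {1..k}
      \<and> \<beta> \<in> {1..l} \<rightarrow>\<^sub>E {1..r} \<and> inj_on \<beta> {1..l}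
      \<and> \<alpha> ` {1..k} \<union> \<beta> ` {1..l} = {1..r}}"

definition Sord :: "nat \<Rightarrow> nat \<Rightarrow> triple set" where
  "Sord k l = {(r, \<alpha>, \<beta>) \<in> Stilde k l.
      strict_mono_on {1..k} \<alpha> \<and> strict_mono_on {1..l} \<beta>}"

text \<open>General Phi on subvectors: K, L are the index sets of the subvectors of x and y,
  rs the list (r_{i_1},...,r_{i_p}); the entry at position u is x_{alpha^-1(u)} y_{beta^-1(u)}
  with x_empty = y_empty = 1.\<close>
definition Phi_sub :: "nat set \<Rightarrow> nat set \<Rightarrow> nat list \<Rightarrow> (nat \<Rightarrow> nat) \<Rightarrow> (nat \<Rightarrow> nat)
    \<Rightarrow> (nat \<Rightarrow> 'v) \<Rightarrow> (nat \<Rightarrow> 'v) \<Rightarrow> 'v multiset list" where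
  "Phi_sub K L rs \<alpha> \<beta> xs ys =
     map (\<lambda>u. image_mset xs (mset_set {i \<in> K. \<alpha> i = u})
             + image_mset ys (mset_set {j \<in> L. \<beta> j = u})) rs"

definition Phi :: "nat \<Rightarrow> nat \<Rightarrow> nat \<Rightarrow> (nat \<Rightarrow> nat) \<Rightarrow> (nat \<Rightarrow> nat)
    \<Rightarrow> (nat \<Rightarrow> 'v) \<Rightarrow> (nat \<Rightarrow> 'v) \<Rightarrow> 'v multiset list" where
  "Phi k l r \<alpha> \<beta> xs ys = Phi_sub {1..k} {1..l} [1..<Suc r] \<alpha> \<beta> xs ys"

definition permute_vec :: "(nat \<Rightarrow> nat) \<Rightarrow> 'a list \<Rightarrow> 'a list" where
  "permute_vec \<pi> zs = map (\<lambda>u. zs ! (\<pi> u - 1)) [1..<Suc (length zs)]"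

definition act2 :: "nat \<Rightarrow> nat \<Rightarrow> (nat \<Rightarrow> nat) \<Rightarrow> (nat \<Rightarrow> nat) \<Rightarrow> triple \<Rightarrow> triple" where
  "act2 k l \<sigma> \<tau> t = (case t of (r, \<alpha>, \<beta>) \<Rightarrow>
      (r, compose {1..k} \<alpha> (inv \<sigma>), compose {1..l} \<beta> (inv \<tau>)))"

definition actr :: "nat \<Rightarrow> nat \<Rightarrow> (nat \<Rightarrow> nat) \<Rightarrow> triple \<Rightarrow> triple" where
  "actr k l \<pi> t = (case t of (r, \<alpha>, \<beta>) \<Rightarrow>
      (r, compose {1..k} (inv \<pi>) \<alpha>, compose {1..l} (inv \<pi>) \<beta>))"

end

theory Submission
  imports Defs
begin


lemma Phi_nth:
  assumes "u \<in> {1..r}"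
  shows "Phi k l r \<alpha> \<beta> xs ys ! (u - 1) =
     image_mset xs (mset_set {i \<in> {1..k}. \<alpha> i = u}) + image_mset ys (mset_set {j \<in> {1..l}. \<beta> j = u})"
  proof -
  have "u - 1 < length [1..<Suc r]" "[1..<Suc r] ! (u - 1) = u" using assms by (auto simp: nth_upt simp del: upt_Suc)
  then show ?thesis by (simp only: Phi_def Phi_sub_def nth_map)
qed

lemma Phi_length[simp]: "length (Phi k l r \<alpha> \<beta> xs ys) = r"
  by (simp add: Phi_def Phi_sub_def)

lemma Phi_eqI:
  assumes "\<And>u. u \<in> {1..r} \<Longrightarrow> {i \<in> {1..k}. \<alpha> i = u} = {i \<in> {1..k}. \<alpha>' i = u}"
      and "\<And>u. u \<in> {1..r} \<Longrightarrow> {i \<in> {1..l}. \<beta> i = u} = {i \<in> {1..l}. \<beta>' i = u}"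
  shows "Phi k l r \<alpha> \<beta> xs ys = Phi k l r \<alpha>' \<beta>' xs ys"
  unfolding Phi_def Phi_sub_def using assms
  by (intro map_cong refl) (simp del: upt_Suc)

lemma Inl_in_Phi:
  assumes "u \<in> {1..r}" "i \<in> {1..k}"
  shows "Inl i \<in># Phi k l r \<alpha> \<beta> Inl Inr ! (u - 1) \<longleftrightarrow> \<alpha> i = u"
  unfolding Phi_nth[OF assms(1)] using assms(2) by auto

lemma Inr_in_Phi:
  assumes "u \<in> {1..r}" "j \<in> {1..l}"
  shows "Inr j \<in># Phi k l r \<alpha> \<beta> Inl Inr ! (u - 1) \<longleftrightarrow> \<beta> j = u"
  unfolding Phi_nth[OF assms(1)] using assms(2) by auto

lemma compose_inv_set:
  assumes "\<sigma> permutes {1..k}"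
  shows "{i \<in> {1..k}. compose {1..k} \<alpha> (inv \<sigma>) i = u} = \<sigma> ` {i \<in> {1..k}. \<alpha> i = u}"
proof -
  have "{i \<in> {1..k}. compose {1..k} \<alpha> (inv \<sigma>) i = u} = {i \<in> {1..k}. \<alpha> (inv \<sigma> i) = u}"
    by (auto simp: compose_def)
  also have "\<dots> = \<sigma> ` {i \<in> {1..k}. \<alpha> i = u}"
  proof safe
    fix i assume "i \<in> {1..k}" "u = \<alpha> (inv \<sigma> i)"
    have j: "inv \<sigma> i \<in> {1..k}" using permutes_in_image[OF permutes_inv[OF assms]] \<open>i \<in> {1..k}\<close> by simp
    have e: "i = \<sigma> (inv \<sigma> i)" using permutes_inverses(1)[OF assms] by simp
    have m: "inv \<sigma> i \<in> {x \<in> {1..k}. \<alpha> x = \<alpha> (inv \<sigma> i)}" using j by simp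
    show "i \<in> \<sigma> ` {x \<in> {1..k}. \<alpha> x = \<alpha> (inv \<sigma> i)}"
      by (rule image_eqI[where f=\<sigma> and x="inv \<sigma> i", OF e m])
  next
    fix i assume "i \<in> {1..k}" "u = \<alpha> i"
    then show "\<sigma> i \<in> {1..k}" "\<alpha> (inv \<sigma> (\<sigma> i)) = \<alpha> i"
      using permutes_inverses[OF assms] permutes_in_image[OF assms] by auto
  qed
  finally show ?thesis .
qed

lemma part1:
  assumes s: "\<sigma> permutes {1..k}" and t: "\<tau> permutes {1..l}"
  shows "Phi k l r \<alpha> \<beta> (\<lambda>i. Inl (\<sigma> i) :: var) (\<lambda>j. Inr (\<tau> j))
      = Phi k l r (compose {1..k} \<alpha> (inv \<sigma>)) (compose {1..l} \<beta> (inv \<tau>)) Inl Inr"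
proof -
  have ij: "inj \<sigma>" "inj \<tau>" using s t permutes_inj by blast+
  have a: "image_mset (\<lambda>i. Inl (\<sigma> i) :: var) (mset_set A) = image_mset Inl (mset_set (\<sigma> ` A))" for A
    using ij by (simp add: image_mset_mset_set[symmetric] inj_on_subset multiset.map_comp comp_def)
  have b: "image_mset (\<lambda>i. Inr (\<tau> i) :: var) (mset_set A) = image_mset Inr (mset_set (\<tau> ` A))" for A
    using ij by (simp add: image_mset_mset_set[symmetric] inj_on_subset multiset.map_comp comp_def)
  show ?thesis unfolding Phi_def Phi_sub_def
    by (intro map_cong refl, simp only: a b compose_inv_set[OF s] compose_inv_set[OF t])
qed

lemma ext_eq:
  assumes "\<alpha> \<in> A \<rightarrow>\<^sub>E B" "\<alpha>' \<in> A \<rightarrow>\<^sub>E B'" "\<And>i. i \<in> A \<Longrightarrow> \<alpha> i = \<alpha>' i"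
  shows "\<alpha> = \<alpha>'"
  using assms by (metis PiE_E ext)

lemma part2: "inj_on (\<lambda>(r, \<alpha>, \<beta>). Phi k l r \<alpha> \<beta> (Inl :: nat \<Rightarrow> var) Inr) (Stilde k l)"
proof (rule inj_onI)
  fix x y assume x: "x \<in> Stilde k l" and y: "y \<in> Stilde k l"
    and xy: "(\<lambda>(r, \<alpha>, \<beta>). Phi k l r \<alpha> \<beta> (Inl :: nat \<Rightarrow> var) Inr) x = (\<lambda>(r, \<alpha>, \<beta>). Phi k l r \<alpha> \<beta> (Inl :: nat \<Rightarrow> var) Inr) y"
  obtain r \<alpha> \<beta> where xe: "x = (r, \<alpha>, \<beta>)" by (cases x) auto
  obtain r' \<alpha>' \<beta>' where ye: "y = (r', \<alpha>', \<beta>')" by (cases y) auto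
  have A: "(r, \<alpha>, \<beta>) \<in> Stilde k l" "(r', \<alpha>', \<beta>') \<in> Stilde k l" using x y xe ye by auto
  have E: "Phi k l r \<alpha> \<beta> (Inl :: nat \<Rightarrow> var) Inr = Phi k l r' \<alpha>' \<beta>' Inl Inr" using xy xe ye by simp
  have rr: "r' = r" using arg_cong[OF E, of length] by simp
  note E = E[unfolded rr]
  have "\<alpha> i = \<alpha>' i" if i: "i \<in> {1..k}" for i
  proof -
    have u: "\<alpha> i \<in> {1..r}" using A i by (auto simp: Stilde_def)
    show ?thesis using Inl_in_Phi[OF u i, of l \<alpha> \<beta>] Inl_in_Phi[OF u i, of l \<alpha>' \<beta>'] E by simp
  qed
  moreover have "\<beta> i = \<beta>' i" if i: "i \<in> {1..l}" for i
  proof -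
    have u: "\<beta> i \<in> {1..r}" using A i by (auto simp: Stilde_def)
    show ?thesis using Inr_in_Phi[OF u i, of k \<alpha> \<beta>] Inr_in_Phi[OF u i, of k \<alpha>' \<beta>'] E by simp
  qed
  moreover have "\<alpha> \<in> {1..k} \<rightarrow>\<^sub>E {1..r}" "\<alpha>' \<in> {1..k} \<rightarrow>\<^sub>E {1..r'}"
     "\<beta> \<in> {1..l} \<rightarrow>\<^sub>E {1..r}" "\<beta>' \<in> {1..l} \<rightarrow>\<^sub>E {1..r'}"
    using A by (simp_all add: Stilde_def)
  ultimately show "x = y" unfolding xe ye
    using rr ext_eq[of \<alpha> "{1..k}" _ \<alpha>'] ext_eq[of \<beta> "{1..l}" _ \<beta>'] by simp
qed


lemma sort_decomp:
  fixes \<alpha> :: "nat \<Rightarrow> nat" and k r :: nat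
  assumes a: "\<alpha> \<in> {1..k} \<rightarrow>\<^sub>E {1..r}" and ia: "inj_on \<alpha> {1..k}"
  obtains \<alpha>' \<sigma> where "\<alpha>' \<in> {1..k} \<rightarrow>\<^sub>E {1..r}" "inj_on \<alpha>' {1..k}" "strict_mono_on {1..k} \<alpha>'"
     "\<alpha>' ` {1..k} = \<alpha> ` {1..k}" "\<sigma> permutes {1..k}" "\<alpha> = compose {1..k} \<alpha>' \<sigma>"
proof -
  let ?A = "\<alpha> ` {1..k}"
  define s where "s = sorted_list_of_set ?A"
  have fin: "finite ?A" by simp
  have card: "card ?A = k" using ia by (simp add: card_image)
  have ls: "length s = k" unfolding s_def using card by simp
  have ss: "sorted_wrt (<) s" unfolding s_def by simp
  have sets: "set s = ?A" unfolding s_def using fin by simp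
  define \<alpha>' where "\<alpha>' = (\<lambda>i. if i \<in> {1..k} then s ! (i - 1) else undefined)"
  have sm: "strict_mono_on {1..k} \<alpha>'"
  proof (rule strict_mono_onI)
    fix i j assume "i \<in> {1..k}" "j \<in> {1..k}" "i < j"
    then show "\<alpha>' i < \<alpha>' j" unfolding \<alpha>'_def using ss ls
      by (auto intro: sorted_wrt_nth_less)
  qed
  have ia': "inj_on \<alpha>' {1..k}" using sm strict_mono_on_imp_inj_on by blast
  have im': "\<alpha>' ` {1..k} = ?A"
  proof -
    have "\<alpha>' ` {1..k} = (\<lambda>i. s ! (i - 1)) ` {1..k}" unfolding \<alpha>'_def by auto
    also have "\<dots> = (\<lambda>i. s ! i) ` {0..<k}"
    proof safe
      fix i assume "i \<in> {1..k}" then show "s ! (i - 1) \<in> (!) s ` {0..<k}" by force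
    next
      fix i assume "i \<in> {0..<k}" then show "s ! i \<in> (\<lambda>i. s ! (i - 1)) ` {1..k}"
        by (intro image_eqI[of _ _ "Suc i"]) auto
    qed
    also have "\<dots> = set s" using ls by (auto simp: set_conv_nth)
    finally show ?thesis using sets by simp
  qed
  have a': "\<alpha>' \<in> {1..k} \<rightarrow>\<^sub>E {1..r}"
  proof -
    have "\<alpha>' i \<in> {1..r}" if i: "i \<in> {1..k}" for i
    proof -
      have "\<alpha>' i \<in> \<alpha> ` {1..k}" using im' i by blast
      then show ?thesis using a by auto
    qed
    moreover have "\<alpha>' \<in> extensional {1..k}" unfolding \<alpha>'_def extensional_def by simp
    ultimately show ?thesis by (auto simp: PiE_def Pi_def)
  qed
  define \<sigma> where "\<sigma> = (\<lambda>i. if i \<in> {1..k} then inv_into {1..k} \<alpha>' (\<alpha> i) else i)"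
  have sin: "\<sigma> ` {1..k} \<subseteq> {1..k}"
    unfolding \<sigma>_def using im' by (auto intro: inv_into_into)
  have sinj: "inj_on \<sigma> {1..k}"
  proof (rule inj_onI)
    fix i j assume i: "i \<in> {1..k}" and j: "j \<in> {1..k}" and e: "\<sigma> i = \<sigma> j"
    then have "inv_into {1..k} \<alpha>' (\<alpha> i) = inv_into {1..k} \<alpha>' (\<alpha> j)" unfolding \<sigma>_def by simp
    then have "\<alpha> i = \<alpha> j" using i j im'
      by (metis f_inv_into_f imageI)
    then show "i = j" using ia i j inj_on_def by metis
  qed
  have sp: "\<sigma> permutes {1..k}"
  proof (rule bij_imp_permutes)
    show "bij_betw \<sigma> {1..k} {1..k}" unfolding bij_betw_def
      using sinj endo_inj_surj[OF _ sin sinj] by simp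
    show "\<And>x. x \<notin> {1..k} \<Longrightarrow> \<sigma> x = x" unfolding \<sigma>_def by (simp del: atLeastAtMost_iff)
  qed
  have "\<alpha> = compose {1..k} \<alpha>' \<sigma>"
  proof (rule extensionalityI[of _ "{1..k}"])
    show "\<alpha> \<in> extensional {1..k}" using a by (simp add: PiE_def)
    show "compose {1..k} \<alpha>' \<sigma> \<in> extensional {1..k}" by (simp add: compose_extensional)
    fix i assume i: "i \<in> {1..k}"
    have "\<alpha> i \<in> \<alpha>' ` {1..k}" using im' i by blast
    then have "\<alpha>' (inv_into {1..k} \<alpha>' (\<alpha> i)) = \<alpha> i" by (rule f_inv_into_f)
    moreover have "compose {1..k} \<alpha>' \<sigma> i = \<alpha>' (inv_into {1..k} \<alpha>' (\<alpha> i))"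
      using i unfolding compose_def \<sigma>_def by (simp del: atLeastAtMost_iff)
    ultimately show "\<alpha> i = compose {1..k} \<alpha>' \<sigma> i" by simp
  qed
  then show ?thesis using that[OF a' ia' sm im' sp] by simp
qed

lemma compose_perm:
  fixes \<alpha> :: "nat \<Rightarrow> nat" and k r :: nat
  assumes a: "\<alpha> \<in> {1..k} \<rightarrow>\<^sub>E {1..r}" and ia: "inj_on \<alpha> {1..k}" and s: "\<sigma> permutes {1..k}"
  shows "compose {1..k} \<alpha> \<sigma> \<in> {1..k} \<rightarrow>\<^sub>E {1..r}" "inj_on (compose {1..k} \<alpha> \<sigma>) {1..k}"
    "compose {1..k} \<alpha> \<sigma> ` {1..k} = \<alpha> ` {1..k}"
proof -
  have im: "\<sigma> ` {1..k} = {1..k}" using s by (rule permutes_image)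
  have sx: "\<sigma> x \<in> {1..k}" if "x \<in> {1..k}" for x using that im by blast
  have cx: "compose {1..k} \<alpha> \<sigma> x = \<alpha> (\<sigma> x)" if "x \<in> {1..k}" for x
    using that unfolding compose_def by (simp del: atLeastAtMost_iff)
  have "compose {1..k} \<alpha> \<sigma> ` {1..k} = (\<alpha> \<circ> \<sigma>) ` {1..k}"
  proof (rule image_cong)
    fix x assume "x \<in> {1..k}"
    then show "compose {1..k} \<alpha> \<sigma> x = (\<alpha> \<circ> \<sigma>) x" using cx by simp
  qed (rule refl)
  also have "\<dots> = \<alpha> ` \<sigma> ` {1..k}" by (simp only: image_comp)
  finally show "compose {1..k} \<alpha> \<sigma> ` {1..k} = \<alpha> ` {1..k}" using im by simp
  have "compose {1..k} \<alpha> \<sigma> x \<in> {1..r}" if x: "x \<in> {1..k}" for x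
  proof -
    have "\<alpha> (\<sigma> x) \<in> {1..r}" using a sx[OF x] by (simp only: PiE_iff)
    then show ?thesis using cx[OF x] by simp
  qed
  then show "compose {1..k} \<alpha> \<sigma> \<in> {1..k} \<rightarrow>\<^sub>E {1..r}"
    using compose_extensional by (simp only: PiE_iff) blast
  show "inj_on (compose {1..k} \<alpha> \<sigma>) {1..k}"
  proof (rule inj_onI)
    fix i j assume i: "i \<in> {1..k}" and j: "j \<in> {1..k}" and e: "compose {1..k} \<alpha> \<sigma> i = compose {1..k} \<alpha> \<sigma> j"
    have "\<alpha> (\<sigma> i) = \<alpha> (\<sigma> j)" using e cx[OF i] cx[OF j] by simp
    then have "\<sigma> i = \<sigma> j" using inj_onD[OF ia] sx[OF i] sx[OF j] by blast
    then show "i = j" using permutes_inj[OF s] by (simp add: inj_eq)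
  qed
qed

lemma Stilde_iff: "(r, \<alpha>, \<beta>) \<in> Stilde k l \<longleftrightarrow> max k l \<le> r \<and> r \<le> k + l
      \<and> \<alpha> \<in> {1..k} \<rightarrow>\<^sub>E {1..r} \<and> inj_on \<alpha> {1..k}
      \<and> \<beta> \<in> {1..l} \<rightarrow>\<^sub>E {1..r} \<and> inj_on \<beta> {1..l}
      \<and> \<alpha> ` {1..k} \<union> \<beta> ` {1..l} = {1..r}"
  by (simp add: Stilde_def)

lemma part3: "Stilde k l = {(r, compose {1..k} \<alpha> \<sigma>, compose {1..l} \<beta> \<tau>) | r \<alpha> \<beta> \<sigma> \<tau>.
        (r, \<alpha>, \<beta>) \<in> Sord k l \<and> \<sigma> permutes {1..k} \<and> \<tau> permutes {1..l}}" (is "_ = ?R")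
proof (intro set_eqI iffI)
  fix t assume t: "t \<in> Stilde k l"
  obtain r \<alpha> \<beta> where te: "t = (r, \<alpha>, \<beta>)" by (cases t) auto
  have T: "(r, \<alpha>, \<beta>) \<in> Stilde k l" using t te by simp
  have r1: "max k l \<le> r" "r \<le> k + l" and aP: "\<alpha> \<in> {1..k} \<rightarrow>\<^sub>E {1..r}" and ai: "inj_on \<alpha> {1..k}"
    and bP: "\<beta> \<in> {1..l} \<rightarrow>\<^sub>E {1..r}" and bi: "inj_on \<beta> {1..l}"
    and un: "\<alpha> ` {1..k} \<union> \<beta> ` {1..l} = {1..r}"
    using T by (simp_all only: Stilde_iff)
  obtain \<alpha>' \<sigma> where A: "\<alpha>' \<in> {1..k} \<rightarrow>\<^sub>E {1..r}" "inj_on \<alpha>' {1..k}" "strict_mono_on {1..k} \<alpha>'"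
     "\<alpha>' ` {1..k} = \<alpha> ` {1..k}" "\<sigma> permutes {1..k}" "\<alpha> = compose {1..k} \<alpha>' \<sigma>"
    by (rule sort_decomp[OF aP ai])
  obtain \<beta>' \<tau> where B: "\<beta>' \<in> {1..l} \<rightarrow>\<^sub>E {1..r}" "inj_on \<beta>' {1..l}" "strict_mono_on {1..l} \<beta>'"
     "\<beta>' ` {1..l} = \<beta> ` {1..l}" "\<tau> permutes {1..l}" "\<beta> = compose {1..l} \<beta>' \<tau>"
    by (rule sort_decomp[OF bP bi])
  have "(r, \<alpha>', \<beta>') \<in> Stilde k l"
  proof -
    have "\<alpha>' ` {1..k} \<union> \<beta>' ` {1..l} = {1..r}" using A(4) B(4) un by (simp only:)
    then show ?thesis unfolding Stilde_iff using r1 A(1,2) B(1,2) by (intro conjI) assumption+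
  qed
  then have S: "(r, \<alpha>', \<beta>') \<in> Sord k l"
    unfolding Sord_def using A(3) B(3) by (intro CollectI) (simp only: case_prod_conv simp_thms)
  have e: "t = (r, compose {1..k} \<alpha>' \<sigma>, compose {1..l} \<beta>' \<tau>)" unfolding te by (subst A(6), subst B(6), rule refl)
  show "t \<in> ?R" using e S A(5) B(5) by blast
next
  fix t assume "t \<in> ?R"
  then obtain r \<alpha> \<beta> \<sigma> \<tau> where te: "t = (r, compose {1..k} \<alpha> \<sigma>, compose {1..l} \<beta> \<tau>)"
    and S: "(r, \<alpha>, \<beta>) \<in> Sord k l" and s: "\<sigma> permutes {1..k}" and ta: "\<tau> permutes {1..l}"
    unfolding mem_Collect_eq by (elim exE conjE) (rule that; assumption)
  have T: "(r, \<alpha>, \<beta>) \<in> Stilde k l" using S by (simp add: Sord_def)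
  have r1: "max k l \<le> r" "r \<le> k + l" and aP: "\<alpha> \<in> {1..k} \<rightarrow>\<^sub>E {1..r}" and ai: "inj_on \<alpha> {1..k}"
    and bP: "\<beta> \<in> {1..l} \<rightarrow>\<^sub>E {1..r}" and bi: "inj_on \<beta> {1..l}"
    and un: "\<alpha> ` {1..k} \<union> \<beta> ` {1..l} = {1..r}"
    using T by (simp_all only: Stilde_iff)
  show "t \<in> Stilde k l"
  proof -
    note c1 = compose_perm[OF aP ai s] and c2 = compose_perm[OF bP bi ta]
    have "compose {1..k} \<alpha> \<sigma> ` {1..k} \<union> compose {1..l} \<beta> \<tau> ` {1..l} = {1..r}"
      using c1(3) c2(3) un by (simp only:)
    then show ?thesis unfolding te Stilde_iff using r1 c1(1,2) c2(1,2) by (intro conjI) assumption+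
  qed
qed



lemma compose_id_PiE:
  assumes "\<alpha> \<in> A \<rightarrow>\<^sub>E B"
  shows "compose A \<alpha> (inv id) = \<alpha>" "compose A (inv id) \<alpha> = \<alpha>"
  using assms by (simp_all add: inv_id compose_def PiE_restrict)

lemma compose_comp_inv:
  assumes s1: "\<sigma>1 permutes A" and s2: "\<sigma>2 permutes A"
  shows "compose A (compose A \<alpha> (inv \<sigma>2)) (inv \<sigma>1) = compose A \<alpha> (inv (\<sigma>1 \<circ> \<sigma>2))"
proof
  fix x
  have inv: "inv (\<sigma>1 \<circ> \<sigma>2) = inv \<sigma>2 \<circ> inv \<sigma>1"
    using o_inv_distrib[OF permutes_bij[OF s1] permutes_bij[OF s2]] .
  show "compose A (compose A \<alpha> (inv \<sigma>2)) (inv \<sigma>1) x = compose A \<alpha> (inv (\<sigma>1 \<circ> \<sigma>2)) x"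
  proof (cases "x \<in> A")
    case True
    then have "inv \<sigma>1 x \<in> A" using permutes_in_image[OF permutes_inv[OF s1]] by simp
    then show ?thesis using True by (simp add: compose_def inv)
  next
    case False
    then show ?thesis by (simp add: compose_def)
  qed
qed

lemma compose_comp_inv_left:
  assumes p1: "\<pi>1 permutes A" and p2: "\<pi>2 permutes A"
  shows "compose K (inv \<pi>1) (compose K (inv \<pi>2) \<alpha>) = compose K (inv (\<pi>2 \<circ> \<pi>1)) \<alpha>"
proof
  fix x
  have inv: "inv (\<pi>2 \<circ> \<pi>1) = inv \<pi>1 \<circ> inv \<pi>2"
    using o_inv_distrib[OF permutes_bij[OF p2] permutes_bij[OF p1]] .
  show "compose K (inv \<pi>1) (compose K (inv \<pi>2) \<alpha>) x = compose K (inv (\<pi>2 \<circ> \<pi>1)) \<alpha> x"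
    by (simp add: compose_def inv)
qed

lemma compose_left_perm:
  fixes \<alpha> :: "nat \<Rightarrow> nat" and k r :: nat
  assumes a: "\<alpha> \<in> {1..k} \<rightarrow>\<^sub>E {1..r}" and ia: "inj_on \<alpha> {1..k}" and p: "\<pi> permutes {1..r}"
  shows "compose {1..k} (inv \<pi>) \<alpha> \<in> {1..k} \<rightarrow>\<^sub>E {1..r}" "inj_on (compose {1..k} (inv \<pi>) \<alpha>) {1..k}"
    "compose {1..k} (inv \<pi>) \<alpha> ` {1..k} = inv \<pi> ` \<alpha> ` {1..k}"
proof -
  have pi: "inv \<pi> permutes {1..r}" using permutes_inv[OF p] .
  have cx: "compose {1..k} (inv \<pi>) \<alpha> x = inv \<pi> (\<alpha> x)" if "x \<in> {1..k}" for x
    using that unfolding compose_def by (simp del: atLeastAtMost_iff)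
  have ax: "\<alpha> x \<in> {1..r}" if "x \<in> {1..k}" for x using a that by (simp only: PiE_iff)
  have "compose {1..k} (inv \<pi>) \<alpha> ` {1..k} = (inv \<pi> \<circ> \<alpha>) ` {1..k}"
  proof (rule image_cong)
    fix x assume "x \<in> {1..k}"
    then show "compose {1..k} (inv \<pi>) \<alpha> x = (inv \<pi> \<circ> \<alpha>) x" using cx by simp
  qed (rule refl)
  then show "compose {1..k} (inv \<pi>) \<alpha> ` {1..k} = inv \<pi> ` \<alpha> ` {1..k}" by (simp only: image_comp)
  have "compose {1..k} (inv \<pi>) \<alpha> x \<in> {1..r}" if x: "x \<in> {1..k}" for x
    using cx[OF x] ax[OF x] permutes_in_image[OF pi] by simp
  then show "compose {1..k} (inv \<pi>) \<alpha> \<in> {1..k} \<rightarrow>\<^sub>E {1..r}"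
    using compose_extensional by (simp only: PiE_iff) blast
  show "inj_on (compose {1..k} (inv \<pi>) \<alpha>) {1..k}"
  proof (rule inj_onI)
    fix i j assume i: "i \<in> {1..k}" and j: "j \<in> {1..k}" and e: "compose {1..k} (inv \<pi>) \<alpha> i = compose {1..k} (inv \<pi>) \<alpha> j"
    have "inv \<pi> (\<alpha> i) = inv \<pi> (\<alpha> j)" using e cx[OF i] cx[OF j] by simp
    then have "\<alpha> i = \<alpha> j" using permutes_inj[OF pi] by (simp add: inj_eq)
    then show "i = j" using inj_onD[OF ia] i j by blast
  qed
qed

lemma act2_closed:
  "\<forall>\<sigma> \<tau> t. \<sigma> permutes {1..k} \<longrightarrow> \<tau> permutes {1..l} \<longrightarrow> t \<in> Stilde k l \<longrightarrow>
        act2 k l \<sigma> \<tau> t \<in> Stilde k l"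
proof (intro allI impI)
  fix \<sigma> \<tau> t assume s: "\<sigma> permutes {1..k}" and ta: "\<tau> permutes {1..l}" and t: "t \<in> Stilde k l"
  obtain r \<alpha> \<beta> where te: "t = (r, \<alpha>, \<beta>)" by (cases t) auto
  have T: "(r, \<alpha>, \<beta>) \<in> Stilde k l" using t te by simp
  have r1: "max k l \<le> r" "r \<le> k + l" and aP: "\<alpha> \<in> {1..k} \<rightarrow>\<^sub>E {1..r}" and ai: "inj_on \<alpha> {1..k}"
    and bP: "\<beta> \<in> {1..l} \<rightarrow>\<^sub>E {1..r}" and bi: "inj_on \<beta> {1..l}"
    and un: "\<alpha> ` {1..k} \<union> \<beta> ` {1..l} = {1..r}"
    using T by (simp_all only: Stilde_iff)
  note c1 = compose_perm[OF aP ai permutes_inv[OF s]] and c2 = compose_perm[OF bP bi permutes_inv[OF ta]]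
  have "compose {1..k} \<alpha> (inv \<sigma>) ` {1..k} \<union> compose {1..l} \<beta> (inv \<tau>) ` {1..l} = {1..r}"
    using c1(3) c2(3) un by (simp only:)
  then have "(r, compose {1..k} \<alpha> (inv \<sigma>), compose {1..l} \<beta> (inv \<tau>)) \<in> Stilde k l"
    unfolding Stilde_iff using r1 c1(1,2) c2(1,2) by (intro conjI) assumption+
  then show "act2 k l \<sigma> \<tau> t \<in> Stilde k l" unfolding te act2_def by simp
qed

lemma act2_id: "\<forall>t \<in> Stilde k l. act2 k l id id t = t"
proof
  fix t assume t: "t \<in> Stilde k l"
  obtain r \<alpha> \<beta> where te: "t = (r, \<alpha>, \<beta>)" by (cases t) auto
  have T: "(r, \<alpha>, \<beta>) \<in> Stilde k l" using t te by simp
  have aP: "\<alpha> \<in> {1..k} \<rightarrow>\<^sub>E {1..r}" and bP: "\<beta> \<in> {1..l} \<rightarrow>\<^sub>E {1..r}"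
    using T by (simp_all only: Stilde_iff)
  show "act2 k l id id t = t" unfolding te act2_def using compose_id_PiE(1)[OF aP] compose_id_PiE(1)[OF bP]
    by simp
qed

lemma act2_comp:
  "\<forall>\<sigma>1 \<tau>1 \<sigma>2 \<tau>2 t. \<sigma>1 permutes {1..k} \<longrightarrow> \<tau>1 permutes {1..l} \<longrightarrow>
        \<sigma>2 permutes {1..k} \<longrightarrow> \<tau>2 permutes {1..l} \<longrightarrow> t \<in> Stilde k l \<longrightarrow>
        act2 k l \<sigma>1 \<tau>1 (act2 k l \<sigma>2 \<tau>2 t) = act2 k l (\<sigma>1 \<circ> \<sigma>2) (\<tau>1 \<circ> \<tau>2) t"
proof (intro allI impI)
  fix \<sigma>1 \<tau>1 \<sigma>2 \<tau>2 and t :: triple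
  assume s1: "\<sigma>1 permutes {1..k}" and t1: "\<tau>1 permutes {1..l}" and s2: "\<sigma>2 permutes {1..k}"
    and t2: "\<tau>2 permutes {1..l}" and "t \<in> Stilde k l"
  obtain r \<alpha> \<beta> where te: "t = (r, \<alpha>, \<beta>)" by (cases t) auto
  show "act2 k l \<sigma>1 \<tau>1 (act2 k l \<sigma>2 \<tau>2 t) = act2 k l (\<sigma>1 \<circ> \<sigma>2) (\<tau>1 \<circ> \<tau>2) t"
    unfolding te act2_def using compose_comp_inv[OF s1 s2, of \<alpha>] compose_comp_inv[OF t1 t2, of \<beta>]
    by simp
qed

lemma act2_exists:
  "\<forall>\<sigma> \<tau> r \<alpha> \<beta>. \<sigma> permutes {1..k} \<longrightarrow> \<tau> permutes {1..l} \<longrightarrow> (r, \<alpha>, \<beta>) \<in> Stilde k l \<longrightarrow>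
        (\<exists>(r', \<alpha>', \<beta>') \<in> Stilde k l.
           Phi k l r \<alpha> \<beta> (\<lambda>i. Inl (\<sigma> i) :: var) (\<lambda>j. Inr (\<tau> j)) = Phi k l r' \<alpha>' \<beta>' Inl Inr)"
proof (intro allI impI)
  fix \<sigma> \<tau> r \<alpha> \<beta> assume s: "\<sigma> permutes {1..k}" and ta: "\<tau> permutes {1..l}" and T: "(r, \<alpha>, \<beta>) \<in> Stilde k l"
  have m: "(r, compose {1..k} \<alpha> (inv \<sigma>), compose {1..l} \<beta> (inv \<tau>)) \<in> Stilde k l"
    using act2_closed s ta T unfolding act2_def by fastforce
  show "\<exists>(r', \<alpha>', \<beta>') \<in> Stilde k l.
           Phi k l r \<alpha> \<beta> (\<lambda>i. Inl (\<sigma> i) :: var) (\<lambda>j. Inr (\<tau> j)) = Phi k l r' \<alpha>' \<beta>' Inl Inr"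
    using m part1[OF s ta, of r \<alpha> \<beta>] by blast
qed

lemma perm_fix_id:
  assumes p: "\<sigma> permutes A" and f: "\<And>x. x \<in> A \<Longrightarrow> inv \<sigma> x = x"
  shows "\<sigma> = id"
proof
  fix x show "\<sigma> x = id x"
  proof (cases "x \<in> A")
    case True
    then have "\<sigma> (inv \<sigma> x) = \<sigma> x" using f by simp
    then show ?thesis using permutes_inverses(1)[OF p] by simp
  next
    case False then show ?thesis using permutes_not_in[OF p] by simp
  qed
qed

lemma act2_free:
  "\<forall>\<sigma> \<tau> r \<alpha> \<beta>. \<sigma> permutes {1..k} \<longrightarrow> \<tau> permutes {1..l} \<longrightarrow> (r, \<alpha>, \<beta>) \<in> Stilde k l \<longrightarrow>
        Phi k l r \<alpha> \<beta> (\<lambda>i. Inl (\<sigma> i) :: var) (\<lambda>j. Inr (\<tau> j)) = Phi k l r \<alpha> \<beta> Inl Inr \<longrightarrow>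
        \<sigma> = id \<and> \<tau> = id"
proof (intro allI impI)
  fix \<sigma> \<tau> r \<alpha> \<beta> assume s: "\<sigma> permutes {1..k}" and ta: "\<tau> permutes {1..l}" and T: "(r, \<alpha>, \<beta>) \<in> Stilde k l"
    and E: "Phi k l r \<alpha> \<beta> (\<lambda>i. Inl (\<sigma> i) :: var) (\<lambda>j. Inr (\<tau> j)) = Phi k l r \<alpha> \<beta> Inl Inr"
  have m: "(r, compose {1..k} \<alpha> (inv \<sigma>), compose {1..l} \<beta> (inv \<tau>)) \<in> Stilde k l"
    using act2_closed s ta T unfolding act2_def by fastforce
  have "Phi k l r (compose {1..k} \<alpha> (inv \<sigma>)) (compose {1..l} \<beta> (inv \<tau>)) (Inl :: nat \<Rightarrow> var) Inr
        = Phi k l r \<alpha> \<beta> Inl Inr" using E part1[OF s ta, of r \<alpha> \<beta>] by simp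
  then have "(r, compose {1..k} \<alpha> (inv \<sigma>), compose {1..l} \<beta> (inv \<tau>)) = (r, \<alpha>, \<beta>)"
    using inj_onD[OF part2[of k l] _ m T] by simp
  then have ca: "compose {1..k} \<alpha> (inv \<sigma>) = \<alpha>" and cb: "compose {1..l} \<beta> (inv \<tau>) = \<beta>" by simp_all
  have aP: "\<alpha> \<in> {1..k} \<rightarrow>\<^sub>E {1..r}" and ai: "inj_on \<alpha> {1..k}"
    and bP: "\<beta> \<in> {1..l} \<rightarrow>\<^sub>E {1..r}" and bi: "inj_on \<beta> {1..l}"
    using T by (simp_all only: Stilde_iff)
  have "\<sigma> = id"
  proof (rule perm_fix_id[OF s])
    fix x assume x: "x \<in> {1..k}"
    have ix: "inv \<sigma> x \<in> {1..k}" using permutes_in_image[OF permutes_inv[OF s]] x by simp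
    have "\<alpha> (inv \<sigma> x) = \<alpha> x" using fun_cong[OF ca, of x] x by (simp add: compose_def)
    then show "inv \<sigma> x = x" using inj_onD[OF ai] ix x by blast
  qed
  moreover have "\<tau> = id"
  proof (rule perm_fix_id[OF ta])
    fix x assume x: "x \<in> {1..l}"
    have ix: "inv \<tau> x \<in> {1..l}" using permutes_in_image[OF permutes_inv[OF ta]] x by simp
    have "\<beta> (inv \<tau> x) = \<beta> x" using fun_cong[OF cb, of x] x by (simp add: compose_def)
    then show "inv \<tau> x = x" using inj_onD[OF bi] ix x by blast
  qed
  ultimately show "\<sigma> = id \<and> \<tau> = id" by simp
qed



lemma part4a:
  assumes p: "\<pi> permutes {1..r0}" and T: "(r0, \<alpha>, \<beta>) \<in> Stilde k l"
  shows "permute_vec \<pi> (Phi k l r0 \<alpha> \<beta> (Inl :: nat \<Rightarrow> var) Inr)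
            = Phi k l r0 (compose {1..k} (inv \<pi>) \<alpha>) (compose {1..l} (inv \<pi>) \<beta>) Inl Inr"
proof -
  have "permute_vec \<pi> (Phi k l r0 \<alpha> \<beta> (Inl :: nat \<Rightarrow> var) Inr)
     = map (\<lambda>u. Phi k l r0 \<alpha> \<beta> (Inl :: nat \<Rightarrow> var) Inr ! (\<pi> u - 1)) [1..<Suc r0]"
    unfolding permute_vec_def by simp
  also have "\<dots> = Phi k l r0 (compose {1..k} (inv \<pi>) \<alpha>) (compose {1..l} (inv \<pi>) \<beta>) Inl Inr"
    unfolding Phi_def[of k l r0 "compose {1..k} (inv \<pi>) \<alpha>"] Phi_sub_def
  proof (rule map_cong[OF refl])
    fix u assume "u \<in> set [1..<Suc r0]"
    then have u: "u \<in> {1..r0}" by auto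
    have pu: "\<pi> u \<in> {1..r0}" using permutes_in_image[OF p] u by simp
    have e1: "{i \<in> {1..k}. \<alpha> i = \<pi> u} = {i \<in> {1..k}. compose {1..k} (inv \<pi>) \<alpha> i = u}"
      by (auto simp: compose_def permutes_inv_eq[OF p])
    have e2: "{i \<in> {1..l}. \<beta> i = \<pi> u} = {i \<in> {1..l}. compose {1..l} (inv \<pi>) \<beta> i = u}"
      by (auto simp: compose_def permutes_inv_eq[OF p])
    show "Phi k l r0 \<alpha> \<beta> Inl Inr ! (\<pi> u - 1) =
         image_mset Inl (mset_set {i \<in> {1..k}. compose {1..k} (inv \<pi>) \<alpha> i = u}) +
         image_mset Inr (mset_set {j \<in> {1..l}. compose {1..l} (inv \<pi>) \<beta> j = u})"
      unfolding Phi_nth[OF pu] e1 e2 ..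
  qed
  finally show ?thesis .
qed

lemma part4:
  "\<forall>r0. max k l \<le> r0 \<and> r0 \<le> k + l \<longrightarrow>
        (\<forall>\<pi> \<alpha> \<beta>. \<pi> permutes {1..r0} \<longrightarrow> (r0, \<alpha>, \<beta>) \<in> Stilde k l \<longrightarrow>
            permute_vec \<pi> (Phi k l r0 \<alpha> \<beta> (Inl :: nat \<Rightarrow> var) Inr)
            = Phi k l r0 (compose {1..k} (inv \<pi>) \<alpha>) (compose {1..l} (inv \<pi>) \<beta>) Inl Inr)
      \<and> (\<forall>\<pi> t. \<pi> permutes {1..r0} \<longrightarrow> t \<in> Stilde k l \<longrightarrow> fst t = r0 \<longrightarrow>
            actr k l \<pi> t \<in> Stilde k l \<and> fst (actr k l \<pi> t) = r0)
      \<and> (\<forall>t. t \<in> Stilde k l \<longrightarrow> fst t = r0 \<longrightarrow> actr k l id t = t)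
      \<and> (\<forall>\<pi>1 \<pi>2 t. \<pi>1 permutes {1..r0} \<longrightarrow> \<pi>2 permutes {1..r0} \<longrightarrow> t \<in> Stilde k l \<longrightarrow>
            fst t = r0 \<longrightarrow> actr k l \<pi>1 (actr k l \<pi>2 t) = actr k l (\<pi>2 \<circ> \<pi>1) t)
      \<and> (\<forall>\<pi> t. \<pi> permutes {1..r0} \<longrightarrow> t \<in> Stilde k l \<longrightarrow> fst t = r0 \<longrightarrow>
            actr k l \<pi> t = t \<longrightarrow> \<pi> = id)"
proof (intro allI impI conjI)
  fix r0 :: nat
  show "\<And>\<pi> \<alpha> \<beta>. \<pi> permutes {1..r0} \<Longrightarrow> (r0, \<alpha>, \<beta>) \<in> Stilde k l \<Longrightarrow>
            permute_vec \<pi> (Phi k l r0 \<alpha> \<beta> (Inl :: nat \<Rightarrow> var) Inr)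
            = Phi k l r0 (compose {1..k} (inv \<pi>) \<alpha>) (compose {1..l} (inv \<pi>) \<beta>) Inl Inr"
    by (rule part4a)
next
  fix r0 :: nat and \<pi> and t :: triple
  assume p: "\<pi> permutes {1..r0}" and t: "t \<in> Stilde k l" and f: "fst t = r0"
  obtain \<alpha> \<beta> where te: "t = (r0, \<alpha>, \<beta>)" using f by (cases t) auto
  have T: "(r0, \<alpha>, \<beta>) \<in> Stilde k l" using t te by simp
  have r1: "max k l \<le> r0" "r0 \<le> k + l" and aP: "\<alpha> \<in> {1..k} \<rightarrow>\<^sub>E {1..r0}" and ai: "inj_on \<alpha> {1..k}"
    and bP: "\<beta> \<in> {1..l} \<rightarrow>\<^sub>E {1..r0}" and bi: "inj_on \<beta> {1..l}"
    and un: "\<alpha> ` {1..k} \<union> \<beta> ` {1..l} = {1..r0}"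
    using T by (simp_all only: Stilde_iff)
  note c1 = compose_left_perm[OF aP ai p] and c2 = compose_left_perm[OF bP bi p]
  have "inv \<pi> ` \<alpha> ` {1..k} \<union> inv \<pi> ` \<beta> ` {1..l} = inv \<pi> ` {1..r0}"
    using un by (simp only: image_Un[symmetric])
  also have "\<dots> = {1..r0}" using permutes_image[OF permutes_inv[OF p]] .
  finally have "compose {1..k} (inv \<pi>) \<alpha> ` {1..k} \<union> compose {1..l} (inv \<pi>) \<beta> ` {1..l} = {1..r0}"
    using c1(3) c2(3) by (simp only:)
  then have "(r0, compose {1..k} (inv \<pi>) \<alpha>, compose {1..l} (inv \<pi>) \<beta>) \<in> Stilde k l"
    unfolding Stilde_iff using r1 c1(1,2) c2(1,2) by (intro conjI) assumption+
  then show "actr k l \<pi> t \<in> Stilde k l" unfolding te actr_def by simp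
  show "fst (actr k l \<pi> t) = r0" unfolding te actr_def by simp
next
  fix r0 :: nat and t :: triple
  assume t: "t \<in> Stilde k l" and f: "fst t = r0"
  obtain \<alpha> \<beta> where te: "t = (r0, \<alpha>, \<beta>)" using f by (cases t) auto
  have T: "(r0, \<alpha>, \<beta>) \<in> Stilde k l" using t te by simp
  have aP: "\<alpha> \<in> {1..k} \<rightarrow>\<^sub>E {1..r0}" and bP: "\<beta> \<in> {1..l} \<rightarrow>\<^sub>E {1..r0}"
    using T by (simp_all only: Stilde_iff)
  show "actr k l id t = t" unfolding te actr_def using compose_id_PiE(2)[OF aP] compose_id_PiE(2)[OF bP]
    by simp
next
  fix r0 :: nat and \<pi>1 \<pi>2 and t :: triple
  assume p1: "\<pi>1 permutes {1..r0}" and p2: "\<pi>2 permutes {1..r0}"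
  obtain r \<alpha> \<beta> where te: "t = (r, \<alpha>, \<beta>)" by (cases t) auto
  show "actr k l \<pi>1 (actr k l \<pi>2 t) = actr k l (\<pi>2 \<circ> \<pi>1) t"
    unfolding te actr_def using compose_comp_inv_left[OF p1 p2, of "{1..k}" \<alpha>] compose_comp_inv_left[OF p1 p2, of "{1..l}" \<beta>]
    by simp
next
  fix r0 :: nat and \<pi> and t :: triple
  assume p: "\<pi> permutes {1..r0}" and t: "t \<in> Stilde k l" and f: "fst t = r0" and fx: "actr k l \<pi> t = t"
  obtain \<alpha> \<beta> where te: "t = (r0, \<alpha>, \<beta>)" using f by (cases t) auto
  have T: "(r0, \<alpha>, \<beta>) \<in> Stilde k l" using t te by simp
  have un: "\<alpha> ` {1..k} \<union> \<beta> ` {1..l} = {1..r0}" using T by (simp only: Stilde_iff)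
  have ca: "compose {1..k} (inv \<pi>) \<alpha> = \<alpha>" and cb: "compose {1..l} (inv \<pi>) \<beta> = \<beta>"
    using fx unfolding te actr_def by simp_all
  show "\<pi> = id"
  proof (rule perm_fix_id[OF p])
    fix u assume u: "u \<in> {1..r0}"
    then have "u \<in> \<alpha> ` {1..k} \<or> u \<in> \<beta> ` {1..l}" using un by blast
    then show "inv \<pi> u = u"
    proof
      assume "u \<in> \<alpha> ` {1..k}"
      then obtain i where i: "i \<in> {1..k}" and ui: "u = \<alpha> i" by blast
      show "inv \<pi> u = u" using fun_cong[OF ca, of i] i ui by (simp add: compose_def)
    next
      assume "u \<in> \<beta> ` {1..l}"
      then obtain i where i: "i \<in> {1..l}" and ui: "u = \<beta> i" by blast
      show "inv \<pi> u = u" using fun_cong[OF cb, of i] i ui by (simp add: compose_def)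
    qed
  qed
qed

lemma part5:
  "\<forall>r \<alpha> \<beta> r' r''. (r, \<alpha>, \<beta>) \<in> Stilde k l \<longrightarrow> 1 \<le> r' \<longrightarrow> r' \<le> r'' \<longrightarrow> r'' \<le> r \<longrightarrow>
        (let zs = Phi k l r \<alpha> \<beta> (Inl :: nat \<Rightarrow> var) Inr;
             rs = [r'..<Suc r''];
             K = {i \<in> {1..k}. \<alpha> i \<in> set rs};
             L = {j \<in> {1..l}. \<beta> j \<in> set rs}
         in restrict \<alpha> K ` K \<union> restrict \<beta> L ` L = set rs
            \<and> take (Suc r'' - r') (drop (r' - 1) zs)
              = Phi_sub K L rs (restrict \<alpha> K) (restrict \<beta> L) Inl Inr)"
proof (intro allI impI)
  fix r \<alpha> \<beta> r' r'' assume T: "(r, \<alpha>, \<beta>) \<in> Stilde k l" and h1: "1 \<le> r'" and h2: "r' \<le> r''" and h3: "r'' \<le> r"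
  have un: "\<alpha> ` {1..k} \<union> \<beta> ` {1..l} = {1..r}" using T by (simp only: Stilde_iff)
  define rs where "rs = [r'..<Suc r'']"
  define K where "K = {i \<in> {1..k}. \<alpha> i \<in> set rs}"
  define L where "L = {j \<in> {1..l}. \<beta> j \<in> set rs}"
  have srs: "set rs = {r'..r''}" unfolding rs_def by auto
  have A: "restrict \<alpha> K ` K \<union> restrict \<beta> L ` L = set rs"
  proof -
    have "restrict \<alpha> K ` K = \<alpha> ` K" by auto
    moreover have "restrict \<beta> L ` L = \<beta> ` L" by auto
    moreover have "\<alpha> ` K \<union> \<beta> ` L = set rs"
    proof
      show "\<alpha> ` K \<union> \<beta> ` L \<subseteq> set rs" unfolding K_def L_def by auto
      show "set rs \<subseteq> \<alpha> ` K \<union> \<beta> ` L"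
      proof
        fix u assume u: "u \<in> set rs"
        then have "u \<in> {1..r}" using srs h1 h3 by auto
        then have "u \<in> \<alpha> ` {1..k} \<or> u \<in> \<beta> ` {1..l}" using un by blast
        then show "u \<in> \<alpha> ` K \<union> \<beta> ` L" unfolding K_def L_def using u by auto
      qed
    qed
    ultimately show ?thesis by simp
  qed
  define f where "f = (\<lambda>u. image_mset (Inl :: nat \<Rightarrow> var) (mset_set {i \<in> {1..k}. \<alpha> i = u})
             + image_mset Inr (mset_set {j \<in> {1..l}. \<beta> j = u}))"
  have zs: "Phi k l r \<alpha> \<beta> (Inl :: nat \<Rightarrow> var) Inr = map f [1..<Suc r]"
    unfolding Phi_def Phi_sub_def f_def ..
  have "take (Suc r'' - r') (drop (r' - 1) (map f [1..<Suc r])) = map f rs"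
  proof -
    have "drop (r' - 1) [1..<Suc r] = [r'..<Suc r]" using h1 h2 h3 by (simp add: drop_upt)
    moreover have "take (Suc r'' - r') [r'..<Suc r] = rs" unfolding rs_def using h2 h3 by (simp add: take_upt del: upt_Suc)
    ultimately show ?thesis by (simp add: drop_map take_map)
  qed
  also have "\<dots> = Phi_sub K L rs (restrict \<alpha> K) (restrict \<beta> L) Inl Inr"
    unfolding Phi_sub_def
  proof (rule map_cong[OF refl])
    fix u assume u: "u \<in> set rs"
    have "{i \<in> K. restrict \<alpha> K i = u} = {i \<in> {1..k}. \<alpha> i = u}" unfolding K_def using u by auto
    moreover have "{i \<in> L. restrict \<beta> L i = u} = {i \<in> {1..l}. \<beta> i = u}" unfolding L_def using u by auto
    ultimately show "f u = image_mset Inl (mset_set {i \<in> K. restrict \<alpha> K i = u}) +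
          image_mset Inr (mset_set {j \<in> L. restrict \<beta> L j = u})" unfolding f_def by simp
  qed
  finally have B: "take (Suc r'' - r') (drop (r' - 1) (Phi k l r \<alpha> \<beta> (Inl :: nat \<Rightarrow> var) Inr))
     = Phi_sub K L rs (restrict \<alpha> K) (restrict \<beta> L) Inl Inr" unfolding zs .
  show "let zs = Phi k l r \<alpha> \<beta> (Inl :: nat \<Rightarrow> var) Inr;
             rs = [r'..<Suc r''];
             K = {i \<in> {1..k}. \<alpha> i \<in> set rs};
             L = {j \<in> {1..l}. \<beta> j \<in> set rs}
         in restrict \<alpha> K ` K \<union> restrict \<beta> L ` L = set rs
            \<and> take (Suc r'' - r') (drop (r' - 1) zs)
              = Phi_sub K L rs (restrict \<alpha> K) (restrict \<beta> L) Inl Inr"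
    unfolding Let_def using A B unfolding K_def L_def rs_def by simp
qed


lemma part1_all:
  "\<forall>\<sigma> \<tau> r \<alpha> \<beta>. \<sigma> permutes {1..k} \<longrightarrow> \<tau> permutes {1..l} \<longrightarrow> (r, \<alpha>, \<beta>) \<in> Stilde k l \<longrightarrow>
      Phi k l r \<alpha> \<beta> (\<lambda>i. Inl (\<sigma> i) :: var) (\<lambda>j. Inr (\<tau> j))
      = Phi k l r (compose {1..k} \<alpha> (inv \<sigma>)) (compose {1..l} \<beta> (inv \<tau>)) Inl Inr"
  using part1 by blast

theorem lemma6p2:
  fixes k l :: nat
  assumes "k \<ge> 1" and "l \<ge> 1"
  shows
  \<comment> \<open>(1)\<close>
  "(\<forall>\<sigma> \<tau> r \<alpha> \<beta>. \<sigma> permutes {1..k} \<longrightarrow> \<tau> permutes {1..l} \<longrightarrow> (r, \<alpha>, \<beta>) \<in> Stilde k l \<longrightarrow>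
      Phi k l r \<alpha> \<beta> (\<lambda>i. Inl (\<sigma> i) :: var) (\<lambda>j. Inr (\<tau> j))
      = Phi k l r (compose {1..k} \<alpha> (inv \<sigma>)) (compose {1..l} \<beta> (inv \<tau>)) Inl Inr)
   \<comment> \<open>(2)\<close>
   \<and> inj_on (\<lambda>(r, \<alpha>, \<beta>). Phi k l r \<alpha> \<beta> (Inl :: nat \<Rightarrow> var) Inr) (Stilde k l)
   \<comment> \<open>(3)\<close>
   \<and> Stilde k l = {(r, compose {1..k} \<alpha> \<sigma>, compose {1..l} \<beta> \<tau>) | r \<alpha> \<beta> \<sigma> \<tau>.
        (r, \<alpha>, \<beta>) \<in> Sord k l \<and> \<sigma> permutes {1..k} \<and> \<tau> permutes {1..l}}
   \<and> (\<forall>\<sigma> \<tau> t. \<sigma> permutes {1..k} \<longrightarrow> \<tau> permutes {1..l} \<longrightarrow> t \<in> Stilde k l \<longrightarrow>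
        act2 k l \<sigma> \<tau> t \<in> Stilde k l)
   \<and> (\<forall>t \<in> Stilde k l. act2 k l id id t = t)
   \<and> (\<forall>\<sigma>1 \<tau>1 \<sigma>2 \<tau>2 t. \<sigma>1 permutes {1..k} \<longrightarrow> \<tau>1 permutes {1..l} \<longrightarrow>
        \<sigma>2 permutes {1..k} \<longrightarrow> \<tau>2 permutes {1..l} \<longrightarrow> t \<in> Stilde k l \<longrightarrow>
        act2 k l \<sigma>1 \<tau>1 (act2 k l \<sigma>2 \<tau>2 t) = act2 k l (\<sigma>1 \<circ> \<sigma>2) (\<tau>1 \<circ> \<tau>2) t)
   \<and> (\<forall>\<sigma> \<tau> r \<alpha> \<beta>. \<sigma> permutes {1..k} \<longrightarrow> \<tau> permutes {1..l} \<longrightarrow> (r, \<alpha>, \<beta>) \<in> Stilde k l \<longrightarrow>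
        (\<exists>(r', \<alpha>', \<beta>') \<in> Stilde k l.
           Phi k l r \<alpha> \<beta> (\<lambda>i. Inl (\<sigma> i) :: var) (\<lambda>j. Inr (\<tau> j)) = Phi k l r' \<alpha>' \<beta>' Inl Inr))
   \<and> (\<forall>\<sigma> \<tau> r \<alpha> \<beta>. \<sigma> permutes {1..k} \<longrightarrow> \<tau> permutes {1..l} \<longrightarrow> (r, \<alpha>, \<beta>) \<in> Stilde k l \<longrightarrow>
        Phi k l r \<alpha> \<beta> (\<lambda>i. Inl (\<sigma> i) :: var) (\<lambda>j. Inr (\<tau> j)) = Phi k l r \<alpha> \<beta> Inl Inr \<longrightarrow>
        \<sigma> = id \<and> \<tau> = id)
   \<comment> \<open>(4)\<close>
   \<and> (\<forall>r0. max k l \<le> r0 \<and> r0 \<le> k + l \<longrightarrow>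
        (\<forall>\<pi> \<alpha> \<beta>. \<pi> permutes {1..r0} \<longrightarrow> (r0, \<alpha>, \<beta>) \<in> Stilde k l \<longrightarrow>
            permute_vec \<pi> (Phi k l r0 \<alpha> \<beta> (Inl :: nat \<Rightarrow> var) Inr)
            = Phi k l r0 (compose {1..k} (inv \<pi>) \<alpha>) (compose {1..l} (inv \<pi>) \<beta>) Inl Inr)
      \<and> (\<forall>\<pi> t. \<pi> permutes {1..r0} \<longrightarrow> t \<in> Stilde k l \<longrightarrow> fst t = r0 \<longrightarrow>
            actr k l \<pi> t \<in> Stilde k l \<and> fst (actr k l \<pi> t) = r0)
      \<and> (\<forall>t. t \<in> Stilde k l \<longrightarrow> fst t = r0 \<longrightarrow> actr k l id t = t)
      \<and> (\<forall>\<pi>1 \<pi>2 t. \<pi>1 permutes {1..r0} \<longrightarrow> \<pi>2 permutes {1..r0} \<longrightarrow> t \<in> Stilde k l \<longrightarrow>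
            fst t = r0 \<longrightarrow> actr k l \<pi>1 (actr k l \<pi>2 t) = actr k l (\<pi>2 \<circ> \<pi>1) t)
      \<and> (\<forall>\<pi> t. \<pi> permutes {1..r0} \<longrightarrow> t \<in> Stilde k l \<longrightarrow> fst t = r0 \<longrightarrow>
            actr k l \<pi> t = t \<longrightarrow> \<pi> = id))
   \<comment> \<open>(5)\<close>
   \<and> (\<forall>r \<alpha> \<beta> r' r''. (r, \<alpha>, \<beta>) \<in> Stilde k l \<longrightarrow> 1 \<le> r' \<longrightarrow> r' \<le> r'' \<longrightarrow> r'' \<le> r \<longrightarrow>
        (let zs = Phi k l r \<alpha> \<beta> (Inl :: nat \<Rightarrow> var) Inr;
             rs = [r'..<Suc r''];
             K = {i \<in> {1..k}. \<alpha> i \<in> set rs};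
             L = {j \<in> {1..l}. \<beta> j \<in> set rs}
         in restrict \<alpha> K ` K \<union> restrict \<beta> L ` L = set rs
            \<and> take (Suc r'' - r') (drop (r' - 1) zs)
              = Phi_sub K L rs (restrict \<alpha> K) (restrict \<beta> L) Inl Inr))"
  using part1_all part2 part3 act2_closed act2_id act2_comp act2_exists act2_free part4 part5
  by (intro conjI) assumption+

end
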